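(* Let $|q|<1$, let $x,y$ be complex numbers and let $n,m\ge 0$ be integers. Then $$h_n(x,y|q)\,h_m(x,y|q)=\sum_{l=0}^{\min\{m,n\}}\sum_{k=0}^{\min\{m,n\}}{m\brack l}{n\brack l}{m-l\brack k}{n-l\brack k}(q;q)_k(q;q)_l(-1)^k x^l y^k q^{\binom{k}{2}}\,h_{n+m-2l-k}(x,y|q).$$
   Context: Throughout $|q|<1$. $(a;q)_n=\prod_{j=0}^{n-1}(1-aq^j)$, ${n\brack k}=\frac{(q;q)_n}{(q;q)_k(q;q)_{n-k}}$ for $0\le k\le n$ and ${n\brack k}=0$ for $k>n$. $P_n(x,y)=(x-y)(x-qy)\cdots(x-q^{n-1}y)$ with $P_0=1$, and $h_n(x,y|q)=\sum_{k=0}^n{n\brack k}P_k(x,y)$. *)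

theory Defs
  imports "HOL-Analysis.Analysis"
begin

definition qpoch :: "complex \<Rightarrow> complex \<Rightarrow> nat \<Rightarrow> complex" where
  "qpoch a q n = (\<Prod>j<n. (1 - a * q ^ j))"

definition qbinom :: "complex \<Rightarrow> nat \<Rightarrow> nat \<Rightarrow> complex" where
  "qbinom q n k = (if k \<le> n then qpoch q q n / (qpoch q q k * qpoch q q (n - k)) else 0)"

definition Pq :: "complex \<Rightarrow> nat \<Rightarrow> complex \<Rightarrow> complex \<Rightarrow> complex" where
  "Pq q n x y = (\<Prod>j<n. (x - q ^ j * y))"

definition hq :: "complex \<Rightarrow> nat \<Rightarrow> complex \<Rightarrow> complex \<Rightarrow> complex" where
  "hq q n x y = (\<Sum>k=0..n. qbinom q n k * Pq q k x y)"

end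

theory Submission
  imports Defs
begin

definition Wf :: "complex \<Rightarrow> int \<Rightarrow> complex" where
  "Wf q j = (if j < 0 then 0 else 1 / qpoch q q (nat j))"

lemma qpoch_Suc: "qpoch q q (Suc j) = qpoch q q j * (1 - q ^ Suc j)"
  by (simp add: qpoch_def)

lemma norm_pow_Suc_lt: "norm (q::complex) < 1 \<Longrightarrow> norm (q ^ Suc j) < 1"
proof -
  assume q: "norm q < 1"
  have a: "norm q ^ j \<le> 1" by (rule power_le_one) (use q in auto)
  have "norm q ^ Suc j = norm q * norm q ^ j" by simp
  also have "\<dots> \<le> norm q" using a mult_left_mono[of "norm q ^ j" 1 "norm q"] by simp
  finally have "norm q ^ Suc j < 1" using q by linarith
  then show ?thesis by (simp only: norm_power)
qed

lemma one_minus_pow_nz: "norm (q::complex) < 1 \<Longrightarrow> 1 - q ^ Suc j \<noteq> 0"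
proof
  assume q: "norm q < 1" and h: "1 - q ^ Suc j = 0"
  have "q ^ Suc j = 1" using h by (metis right_minus_eq)
  then have "norm (q ^ Suc j) = 1" by (simp only: norm_one)
  with norm_pow_Suc_lt[OF q, of j] show False by simp
qed

lemma qpoch_nz: "norm q < 1 \<Longrightarrow> qpoch q q j \<noteq> 0"
proof (induction j)
  case 0 then show ?case by (simp add: qpoch_def)
next
  case (Suc j)
  have "1 - q ^ Suc j \<noteq> 0" using Suc.prems by (rule one_minus_pow_nz)
  then show ?case using Suc by (simp only: qpoch_Suc mult_eq_0_iff de_Morgan_disj) blast
qed

lemma Wf_shift:
  assumes "norm q < 1"
  shows "Wf q (j - 1) = (1 - q ^ nat j) * Wf q j"
proof (cases "j \<le> 0")
  case True then show ?thesis by (cases "j = 0") (auto simp: Wf_def)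
next
  case False
  then have nj: "nat j = Suc (nat (j - 1))" by simp
  define j' where "j' = nat (j - 1)"
  have e1: "Wf q (j - 1) = 1 / qpoch q q j'" using False by (simp add: Wf_def j'_def)
  have e2: "Wf q j = 1 / (qpoch q q j' * (1 - q ^ Suc j'))"
    using False by (simp add: Wf_def nj j'_def qpoch_Suc del: power_Suc)
  have e3: "nat j = Suc j'" using nj j'_def by simp
  have "1 - q ^ Suc j' \<noteq> 0" by (rule one_minus_pow_nz[OF assms])
  then show ?thesis unfolding e1 e2 e3 by simp
qed

lemma Wf_nat: "Wf q (int j) = 1 / qpoch q q j" by (simp add: Wf_def)

lemma qbinom_W:
  assumes "norm q < 1"
  shows "qbinom q N k = qpoch q q N * Wf q (int k) * Wf q (int N - int k)"
  by (auto simp: qbinom_def Wf_def of_nat_diff nat_diff_distrib)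


lemma hq_ext:
  assumes "N \<le> R"
  shows "hq q N x y = (\<Sum>k\<le>R. qbinom q N k * Pq q k x y)"
proof -
  have "hq q N x y = (\<Sum>k\<le>N. qbinom q N k * Pq q k x y)"
    by (simp add: hq_def atLeast0AtMost)
  also have "\<dots> = (\<Sum>k\<le>R. qbinom q N k * Pq q k x y)"
    by (rule sum.mono_neutral_left) (use assms in \<open>auto simp: qbinom_def\<close>)
  finally show ?thesis .
qed

lemma Pq_Suc: "Pq q (Suc k) x y = Pq q k x y * (x - q ^ k * y)"
  by (simp add: Pq_def)

lemma qbinom_zero: "norm q < 1 \<Longrightarrow> qbinom q N 0 = 1"
  using qpoch_nz[of q N] by (simp add: qbinom_def qpoch_def)

lemma pascal:
  assumes q: "norm q < 1"
  shows "qbinom q (Suc N) (Suc k) = qbinom q N (Suc k) + q ^ (N - k) * qbinom q N k"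
proof (cases "k \<le> N")
  case False
  then show ?thesis by (simp add: qbinom_def)
next
  case True
  have w1: "Wf q (int N - int (Suc k)) = (1 - q ^ (N - k)) * Wf q (int (Suc N) - int (Suc k))"
  proof -
    have a: "int N - int (Suc k) = (int N - int k) - 1" by simp
    have b: "nat (int N - int k) = N - k" using True by simp
    have c: "int (Suc N) - int (Suc k) = int N - int k" by simp
    show ?thesis unfolding a c Wf_shift[OF q, of "int N - int k"] b ..
  qed
  have w2: "Wf q (int k) = (1 - q ^ Suc k) * Wf q (int (Suc k))"
  proof -
    have a: "int k = int (Suc k) - 1" by simp
    have b: "nat (int (Suc k)) = Suc k" by simp
    show ?thesis by (subst a, subst Wf_shift[OF q]) (simp only: b)
  qed
  have w3: "Wf q (int N - int k) = Wf q (int (Suc N) - int (Suc k))" by simp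
  have pw: "q ^ (N - k) * q ^ Suc k = q ^ Suc N"
    using True by (simp add: power_add[symmetric])
  have pw2: "q ^ k * q ^ (N - k) = q ^ N"
    using True by (simp add: power_add[symmetric])
  show ?thesis
    unfolding qbinom_W[OF q] w1 w2 w3 qpoch_Suc
    using pw pw2 by (simp add: algebra_simps)
qed

lemma absorb:
  assumes q: "norm q < 1" and j: "j \<le> N"
  shows "(1 - q ^ (N - j)) * qbinom q N j = (1 - q ^ N) * qbinom q (N - 1) j"
proof (cases N)
  case 0 then show ?thesis using j by simp
next
  case (Suc M)
  have w1: "Wf q (int M - int j) = (1 - q ^ (N - j)) * Wf q (int N - int j)"
  proof -
    have a: "int M - int j = (int N - int j) - 1" using Suc by simp
    have b: "nat (int N - int j) = N - j" using j by simp
    show ?thesis unfolding a Wf_shift[OF q, of "int N - int j"] b ..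
  qed
  have e1: "qbinom q (N - 1) j = qpoch q q M * Wf q (int j) * ((1 - q ^ (N - j)) * Wf q (int N - int j))"
  proof -
    have "qbinom q (N - 1) j = qpoch q q M * Wf q (int j) * Wf q (int M - int j)"
      by (simp add: qbinom_W[OF q] Suc)
    then show ?thesis by (simp only: w1)
  qed
  have e2: "qbinom q N j = qpoch q q M * (1 - q ^ N) * Wf q (int j) * Wf q (int N - int j)"
    unfolding qbinom_W[OF q] Suc qpoch_Suc by simp
  show ?thesis unfolding e1 e2 by (simp add: algebra_simps)
qed

lemma hq_rec:
  assumes q: "norm q < 1"
  shows "hq q (Suc N) x y = (1 + x - y * q ^ N) * hq q N x y - x * (1 - q ^ N) * hq q (N - 1) x y"
proof -
  let ?b = "qbinom q" and ?P = "\<lambda>k. Pq q k x y"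
  have s1: "(\<Sum>k\<le>N. q ^ (N - k) * ?b N k * ?P k) = hq q N x y - (1 - q ^ N) * hq q (N - 1) x y"
  proof -
    have "(\<Sum>k\<le>N. q ^ (N - k) * ?b N k * ?P k) = (\<Sum>k\<le>N. ?b N k * ?P k) - (\<Sum>k\<le>N. (1 - q ^ (N - k)) * ?b N k * ?P k)"
      by (simp add: sum_subtractf[symmetric] algebra_simps)
    also have "(\<Sum>k\<le>N. (1 - q ^ (N - k)) * ?b N k * ?P k) = (\<Sum>k\<le>N. (1 - q ^ N) * (?b (N - 1) k * ?P k))"
      by (rule sum.cong) (auto simp: absorb[OF q])
    also have "\<dots> = (1 - q ^ N) * hq q (N - 1) x y"
      using hq_ext[of "N - 1" N q x y] by (simp add: sum_distrib_left[symmetric])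
    finally show ?thesis using hq_ext[of N N q x y] by simp
  qed
  have "hq q (Suc N) x y = (\<Sum>k\<le>Suc N. ?b (Suc N) k * ?P k)" by (rule hq_ext) simp
  also have "\<dots> = ?b (Suc N) 0 * ?P 0 + (\<Sum>k\<le>N. ?b (Suc N) (Suc k) * ?P (Suc k))"
    by (rule sum.atMost_Suc_shift)
  also have "\<dots> = (?b N 0 * ?P 0 + (\<Sum>k\<le>N. ?b N (Suc k) * ?P (Suc k)))
       + (\<Sum>k\<le>N. q ^ (N - k) * ?b N k * ?P (Suc k))"
    by (simp add: pascal[OF q] qbinom_zero[OF q] distrib_right sum.distrib)
  also have "?b N 0 * ?P 0 + (\<Sum>k\<le>N. ?b N (Suc k) * ?P (Suc k)) = (\<Sum>k\<le>Suc N. ?b N k * ?P k)"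
    by (rule sum.atMost_Suc_shift[symmetric])
  also have "\<dots> = hq q N x y" by (rule hq_ext[symmetric]) simp
  also have "(\<Sum>k\<le>N. q ^ (N - k) * ?b N k * ?P (Suc k))
      = x * (\<Sum>k\<le>N. q ^ (N - k) * ?b N k * ?P k) - y * q ^ N * (\<Sum>k\<le>N. ?b N k * ?P k)"
  proof -
    have "(\<Sum>k\<le>N. q ^ (N - k) * ?b N k * ?P (Suc k))
       = (\<Sum>k\<le>N. x * (q ^ (N - k) * ?b N k * ?P k) - y * q ^ N * (?b N k * ?P k))"
    proof (rule sum.cong)
      fix k assume "k \<in> {..N}"
      then have "q ^ (N - k) * q ^ k = q ^ N" by (simp add: power_add[symmetric])
      then show "q ^ (N - k) * ?b N k * ?P (Suc k) = x * (q ^ (N - k) * ?b N k * ?P k) - y * q ^ N * (?b N k * ?P k)"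
        unfolding Pq_Suc by (simp add: algebra_simps)
    qed simp
    then show ?thesis by (simp add: sum_subtractf sum_distrib_left)
  qed
  finally show ?thesis unfolding s1 by (simp add: hq_ext[symmetric] algebra_simps)
qed


definition ee :: "complex \<Rightarrow> complex \<Rightarrow> nat \<Rightarrow> complex" where
  "ee q y k = (-1) ^ k * y ^ k * q ^ (k choose 2)"

lemma ee_Suc: "ee q y (Suc k) = - y * q ^ k * ee q y k"
proof -
  have "Suc k choose 2 = k + (k choose 2)"
    by (simp add: numeral_2_eq_2 binomial_Suc_Suc)
  then show ?thesis by (simp add: ee_def power_add)
qed

definition CC :: "complex \<Rightarrow> complex \<Rightarrow> complex \<Rightarrow> nat \<Rightarrow> nat \<Rightarrow> int \<Rightarrow> int \<Rightarrow> complex" where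
  "CC q x y n m l k = qpoch q q m * qpoch q q n * x ^ nat l * ee q y (nat k)
     * Wf q l * Wf q k * Wf q (int m - l - k) * Wf q (int n - l - k)"

lemma Wf_neg: "j < 0 \<Longrightarrow> Wf q j = 0" by (simp add: Wf_def)

lemma coeff_zero:
  assumes "l < 0 \<or> k < 0 \<or> int m + 1 - l - k < 0 \<or> int n + 1 - l - k < 0"
  shows "CC q x y n (Suc m) l k = CC q x y n m l k
     + x * (1 - q ^ nat (int n + int m - 2 * (l - 1) - k)) * CC q x y n m (l - 1) k
     + y * (q ^ nat (int n + int m - 2 * l - (k - 1)) - q ^ m) * CC q x y n m l (k - 1)
     - x * (1 - q ^ m) * CC q x y n (m - 1) (l - 1) k"
proof (cases "m = 0")
  case True
  then show ?thesis using assms unfolding CC_def by (auto simp: Wf_neg)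
next
  case False
  then show ?thesis using assms unfolding CC_def by (auto simp: Wf_neg of_nat_diff)
qed


lemma coeff_SS:
  assumes q: "norm q < 1"
    and hm: "m = a + L + K + 1" and hn: "n = b + L + K + 1"
  shows "CC q x y n (Suc m) (int L + 1) (int K + 1) = CC q x y n m (int L + 1) (int K + 1)
     + x * (1 - q ^ nat (int n + int m - 2 * ((int L + 1) - 1) - (int K + 1))) * CC q x y n m ((int L + 1) - 1) (int K + 1)
     + y * (q ^ nat (int n + int m - 2 * (int L + 1) - ((int K + 1) - 1)) - q ^ m) * CC q x y n m (int L + 1) ((int K + 1) - 1)
     - x * (1 - q ^ m) * CC q x y n (m - 1) ((int L + 1) - 1) (int K + 1)"
proof -
  let ?W = "Wf q"
  have f1: "?W (int (Suc m) - (int L + 1) - (int K + 1)) = ?W (int a)" using hm by (simp add: algebra_simps)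
  have f2: "?W (int m - (int L + 1) - (int K + 1)) = (1 - q ^ a) * ?W (int a)"
  proof -
    have "int m - (int L + 1) - (int K + 1) = int a - 1" using hm by simp
    then show ?thesis using Wf_shift[OF q, of "int a"] by simp
  qed
  have f3: "?W (int n - (int L + 1) - (int K + 1)) = (1 - q ^ b) * ?W (int b)"
  proof -
    have "int n - (int L + 1) - (int K + 1) = int b - 1" using hn by simp
    then show ?thesis using Wf_shift[OF q, of "int b"] by simp
  qed
  have f4: "?W (int m - (int L + 1 - 1) - (int K + 1)) = ?W (int a)" using hm by (simp add: algebra_simps)
  have f5: "?W (int n - (int L + 1 - 1) - (int K + 1)) = ?W (int b)" using hn by (simp add: algebra_simps)
  have f6: "?W (int m - (int L + 1) - (int K + 1 - 1)) = ?W (int a)" using hm by (simp add: algebra_simps)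
  have f7: "?W (int n - (int L + 1) - (int K + 1 - 1)) = ?W (int b)" using hn by (simp add: algebra_simps)
  have f8: "?W (int (m - 1) - (int L + 1 - 1) - (int K + 1)) = (1 - q ^ a) * ?W (int a)"
  proof -
    have e: "int (m - 1) - (int L + 1 - 1) - (int K + 1) = int a - 1" using hm by simp
    show ?thesis unfolding e Wf_shift[OF q] nat_int ..
  qed
  have f9: "?W (int L + 1 - 1) = (1 - q ^ Suc L) * ?W (int L + 1)"
    using Wf_shift[OF q, of "int L + 1"] by (simp add: nat_add_distrib)
  have f10: "?W (int K + 1 - 1) = (1 - q ^ Suc K) * ?W (int K + 1)"
    using Wf_shift[OF q, of "int K + 1"] by (simp add: nat_add_distrib)
  have g1: "nat (int L + 1) = Suc L" "nat (int L + 1 - 1) = L" "nat (int K + 1) = Suc K" "nat (int K + 1 - 1) = K"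
    by simp_all
  have g2: "nat (int n + int m - 2 * ((int L + 1) - 1) - (int K + 1)) = a + b + K + 1"
    using hm hn by simp
  have g3: "nat (int n + int m - 2 * (int L + 1) - ((int K + 1) - 1)) = a + b + K"
    using hm hn by simp
  have g4: "qpoch q q (Suc m) = qpoch q q (m - 1) * (1 - q ^ m) * (1 - q ^ Suc m)"
    "qpoch q q m = qpoch q q (m - 1) * (1 - q ^ m)"
    using hm qpoch_Suc[of q "m - 1"] by (simp_all add: qpoch_Suc)
  show ?thesis
    unfolding CC_def f1 f2 f3 f4 f5 f6 f7 f8 f9 f10 g1 g2 g3 g4 ee_Suc
    unfolding hm by (simp add: power_add algebra_simps Wf_neg)
qed


lemma coeff_0S:
  assumes q: "norm q < 1"
    and hm: "m = a + K" and hn: "n = b + K"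
  shows "CC q x y n (Suc m) 0 (int K + 1) = CC q x y n m 0 (int K + 1)
     + x * (1 - q ^ nat (int n + int m - 2 * (0 - 1) - (int K + 1))) * CC q x y n m (0 - 1) (int K + 1)
     + y * (q ^ nat (int n + int m - 2 * 0 - ((int K + 1) - 1)) - q ^ m) * CC q x y n m 0 ((int K + 1) - 1)
     - x * (1 - q ^ m) * CC q x y n (m - 1) (0 - 1) (int K + 1)"
proof -
  let ?W = "Wf q"
  have z: "CC q x y n m (0 - 1) (int K + 1) = 0" "CC q x y n (m - 1) (0 - 1) (int K + 1) = 0"
    by (simp_all add: CC_def Wf_neg)
  have f1: "?W (int (Suc m) - 0 - (int K + 1)) = ?W (int a)" using hm by (simp add: algebra_simps)
  have f2: "?W (int m - 0 - (int K + 1)) = (1 - q ^ a) * ?W (int a)"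
  proof -
    have e: "int m - 0 - (int K + 1) = int a - 1" using hm by simp
    show ?thesis unfolding e Wf_shift[OF q] nat_int ..
  qed
  have f3: "?W (int n - 0 - (int K + 1)) = (1 - q ^ b) * ?W (int b)"
  proof -
    have e: "int n - 0 - (int K + 1) = int b - 1" using hn by simp
    show ?thesis unfolding e Wf_shift[OF q] nat_int ..
  qed
  have f6: "?W (int m - 0 - (int K + 1 - 1)) = ?W (int a)" using hm by (simp add: algebra_simps)
  have f7: "?W (int n - 0 - (int K + 1 - 1)) = ?W (int b)" using hn by (simp add: algebra_simps)
  have f10: "?W (int K + 1 - 1) = (1 - q ^ Suc K) * ?W (int K + 1)"
    using Wf_shift[OF q, of "int K + 1"] by (simp add: nat_add_distrib)
  have g1: "nat (0::int) = 0" "nat (int K + 1) = Suc K" "nat (int K + 1 - 1) = K"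
    by simp_all
  have g3: "nat (int n + int m - 2 * 0 - ((int K + 1) - 1)) = a + b + K"
    using hm hn by simp
  have g4: "qpoch q q (Suc m) = qpoch q q m * (1 - q ^ Suc m)"
    by (simp add: qpoch_Suc)
  show ?thesis
    unfolding z CC_def f1 f2 f3 f6 f7 f10 g1 g3 g4 ee_Suc
    unfolding hm by (simp add: power_add algebra_simps Wf_neg)
qed

lemma coeff_S0:
  assumes q: "norm q < 1"
    and hm: "m = a + L" and hn: "n = b + L" and m1: "m \<ge> 1"
  shows "CC q x y n (Suc m) (int L + 1) 0 = CC q x y n m (int L + 1) 0
     + x * (1 - q ^ nat (int n + int m - 2 * ((int L + 1) - 1) - 0)) * CC q x y n m ((int L + 1) - 1) 0
     + y * (q ^ nat (int n + int m - 2 * (int L + 1) - (0 - 1)) - q ^ m) * CC q x y n m (int L + 1) (0 - 1)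
     - x * (1 - q ^ m) * CC q x y n (m - 1) ((int L + 1) - 1) 0"
proof -
  let ?W = "Wf q"
  have z: "CC q x y n m (int L + 1) (0 - 1) = 0"
    by (simp_all add: CC_def Wf_neg)
  have f1: "?W (int (Suc m) - (int L + 1) - 0) = ?W (int a)" using hm by (simp add: algebra_simps)
  have f2: "?W (int m - (int L + 1) - 0) = (1 - q ^ a) * ?W (int a)"
  proof -
    have e: "int m - (int L + 1) - 0 = int a - 1" using hm by simp
    show ?thesis unfolding e Wf_shift[OF q] nat_int ..
  qed
  have f3: "?W (int n - (int L + 1) - 0) = (1 - q ^ b) * ?W (int b)"
  proof -
    have e: "int n - (int L + 1) - 0 = int b - 1" using hn by simp
    show ?thesis unfolding e Wf_shift[OF q] nat_int ..
  qed
  have f4: "?W (int m - (int L + 1 - 1) - 0) = ?W (int a)" using hm by (simp add: algebra_simps)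
  have f5: "?W (int n - (int L + 1 - 1) - 0) = ?W (int b)" using hn by (simp add: algebra_simps)
  have f8: "?W (int (m - 1) - (int L + 1 - 1) - 0) = (1 - q ^ a) * ?W (int a)"
  proof -
    have e: "int (m - 1) - (int L + 1 - 1) - 0 = int a - 1" using hm m1 by simp
    show ?thesis unfolding e Wf_shift[OF q] nat_int ..
  qed
  have f9: "?W (int L + 1 - 1) = (1 - q ^ Suc L) * ?W (int L + 1)"
    using Wf_shift[OF q, of "int L + 1"] by (simp add: nat_add_distrib)
  have g1: "nat (int L + 1) = Suc L" "nat (int L + 1 - 1) = L" "nat (0::int) = 0"
    by simp_all
  have g2: "nat (int n + int m - 2 * ((int L + 1) - 1) - 0) = a + b"
    using hm hn by simp
  have g4: "qpoch q q (Suc m) = qpoch q q (m - 1) * (1 - q ^ m) * (1 - q ^ Suc m)"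
    "qpoch q q m = qpoch q q (m - 1) * (1 - q ^ m)"
    using m1 qpoch_Suc[of q "m - 1"] by (simp_all add: qpoch_Suc)
  show ?thesis
    unfolding z CC_def f1 f2 f3 f4 f5 f8 f9 g1 g2 g4
    unfolding hm by (simp add: power_add algebra_simps Wf_neg)
qed

lemma coeff_S0_m0:
  assumes q: "norm q < 1"
  shows "CC q x y n (Suc 0) 1 0 = CC q x y n 0 1 0
     + x * (1 - q ^ nat (int n + int 0 - 2 * (1 - 1) - 0)) * CC q x y n 0 (1 - 1) 0
     + y * (q ^ nat (int n + int 0 - 2 * 1 - (0 - 1)) - q ^ 0) * CC q x y n 0 1 (0 - 1)
     - x * (1 - q ^ 0) * CC q x y n (0 - 1) (1 - 1) 0"
proof (cases n)
  case 0
  then show ?thesis by (simp add: CC_def Wf_neg)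
next
  case (Suc n')
  have a: "Wf q (int n - 1 - 0) = (1 - q ^ n) * Wf q (int n)"
    using Wf_shift[OF q, of "int n"] by simp
  have b: "Wf q 1 = 1 / (1 - q)" by (simp add: Wf_def qpoch_def)
  have c: "1 - q \<noteq> 0" using one_minus_pow_nz[OF q, of 0] by simp
  show ?thesis unfolding CC_def a b using c by (simp add: Wf_neg Wf_def qpoch_def)
qed

lemma coeff_00:
  assumes q: "norm q < 1"
  shows "CC q x y n (Suc m) 0 0 = CC q x y n m 0 0
     + x * (1 - q ^ nat (int n + int m - 2 * (0 - 1) - 0)) * CC q x y n m (0 - 1) 0
     + y * (q ^ nat (int n + int m - 2 * 0 - (0 - 1)) - q ^ m) * CC q x y n m 0 (0 - 1)
     - x * (1 - q ^ m) * CC q x y n (m - 1) (0 - 1) 0"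
proof -
  have h: "nat (1 + int m) = Suc m" by simp
  have h0: "qpoch q q 0 = 1" by (simp add: qpoch_def)
  show ?thesis using qpoch_nz[OF q, of m] qpoch_nz[OF q, of "Suc m"] qpoch_nz[OF q, of n]
    by (simp add: CC_def Wf_neg Wf_def ee_def h h0)
qed


lemma coeff:
  assumes q: "norm q < 1"
  shows "CC q x y n (Suc m) l k = CC q x y n m l k
     + x * (1 - q ^ nat (int n + int m - 2 * (l - 1) - k)) * CC q x y n m (l - 1) k
     + y * (q ^ nat (int n + int m - 2 * l - (k - 1)) - q ^ m) * CC q x y n m l (k - 1)
     - x * (1 - q ^ m) * CC q x y n (m - 1) (l - 1) k"
proof (cases "l < 0 \<or> k < 0 \<or> int m + 1 - l - k < 0 \<or> int n + 1 - l - k < 0")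
  case True then show ?thesis by (rule coeff_zero)
next
  case False
  then have nn: "l \<ge> 0" "k \<ge> 0" "int m + 1 - l - k \<ge> 0" "int n + 1 - l - k \<ge> 0" by auto
  obtain L where l: "l = int L" using nn(1) nonneg_int_cases by blast
  obtain K where k: "k = int K" using nn(2) nonneg_int_cases by blast
  obtain a where a: "int m + 1 - l - k = int a" using nn(3) nonneg_int_cases by metis
  obtain b where b: "int n + 1 - l - k = int b" using nn(4) nonneg_int_cases by metis
  show ?thesis
  proof (cases L)
    case 0
    show ?thesis
    proof (cases K)
      case 0
      have "l = 0" "k = 0" using l k \<open>L = 0\<close> 0 by simp_all
      then show ?thesis using coeff_00[OF q] by simp
    next
      case (Suc K')
      have l0: "l = 0" and kk: "k = int K' + 1" using l k \<open>L = 0\<close> Suc by simp_all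
      have hm: "m = a + K'" and hn: "n = b + K'" using a b l0 kk by simp_all
      show ?thesis unfolding l0 kk by (rule coeff_0S[OF q hm hn])
    qed
  next
    case (Suc L')
    have ll: "l = int L' + 1" using l Suc by simp
    show ?thesis
    proof (cases K)
      case 0
      have k0: "k = 0" using k 0 by simp
      have hm: "m = a + L'" and hn: "n = b + L'" using a b ll k0 by simp_all
      show ?thesis
      proof (cases "m = 0")
        case True
        then have "L' = 0" using hm by simp
        then have l1: "l = 1" using ll by simp
        show ?thesis unfolding l1 k0 True by (rule coeff_S0_m0[OF q])
      next
        case False
        then show ?thesis unfolding ll k0 by (intro coeff_S0[OF q hm hn]) simp
      qed
    next
      case (Suc K')
      have kk: "k = int K' + 1" using k Suc by simp
      have hm: "m = a + L' + K' + 1" and hn: "n = b + L' + K' + 1" using a b ll kk by simp_all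
      show ?thesis unfolding ll kk by (rule coeff_SS[OF q hm hn])
    qed
  qed
qed


lemma CC_supp:
  assumes "CC q x y n m l k \<noteq> 0"
  shows "0 \<le> l \<and> 0 \<le> k \<and> l + k \<le> int m \<and> l + k \<le> int n"
proof -
  have "\<not> (l < 0 \<or> k < 0 \<or> int m - l - k < 0 \<or> int n - l - k < 0)"
    using assms unfolding CC_def by (auto simp: Wf_neg)
  then show ?thesis by auto
qed

lemma shift_sum:
  fixes f :: "int \<Rightarrow> complex"
  assumes "f (-1) = 0" "f (int R) = 0"
  shows "(\<Sum>l\<le>R. f (int l - 1)) = (\<Sum>l\<le>R. f (int l))"
proof (cases R)
  case 0 then show ?thesis using assms by simp
next
  case (Suc R')
  have "(\<Sum>l\<le>R. f (int l - 1)) = f (-1) + (\<Sum>l\<le>R'. f (int (Suc l) - 1))"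
    unfolding Suc by (subst sum.atMost_Suc_shift) simp
  also have "\<dots> = (\<Sum>l\<le>R'. f (int l))" using assms by simp
  also have "\<dots> = (\<Sum>l\<le>R. f (int l))" using assms Suc by simp
  finally show ?thesis .
qed

definition SS :: "complex \<Rightarrow> complex \<Rightarrow> complex \<Rightarrow> nat \<Rightarrow> nat \<Rightarrow> complex" where
  "SS q x y n m = (\<Sum>l\<le>n+1. \<Sum>k\<le>n+1. CC q x y n m (int l) (int k)
      * hq q (nat (int n + int m - 2 * int l - int k)) x y)"


lemma SS_step:
  assumes q: "norm q < 1"
  shows "SS q x y n (Suc m) = (1 + x - y * q ^ m) * SS q x y n m - x * (1 - q ^ m) * SS q x y n (m - 1)"
proof -
  let ?C = "CC q x y n" and ?h = "\<lambda>j. hq q j x y" and ?R = "n + 1"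
  define Nf where "Nf l k = nat (int n + int m - 2 * l - k)" for l k :: int
  define F1 where "F1 l k = ?C m l k * ?h (Nf l k + 1)" for l k
  define F2 where "F2 l k = x * (1 - q ^ Nf l k) * ?C m l k * ?h (Nf l k - 1)" for l k
  define F3 where "F3 l k = y * (q ^ Nf l k - q ^ m) * ?C m l k * ?h (Nf l k)" for l k
  define F4 where "F4 l k = x * (1 - q ^ m) * ?C (m - 1) l k * ?h (nat (int n + int (m - 1) - 2 * l - k))" for l k
  have pt: "(1 + x - y * q ^ m) * (?C m l k * ?h (Nf l k)) = F1 l k + F2 l k + F3 l k" for l k
  proof -
    have r: "?h (Nf l k + 1) = (1 + x - y * q ^ Nf l k) * ?h (Nf l k) - x * (1 - q ^ Nf l k) * ?h (Nf l k - 1)"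
      using hq_rec[OF q, of "Nf l k" x y] by simp
    show ?thesis unfolding F1_def F2_def F3_def r by algebra
  qed
  have A1: "(1 + x - y * q ^ m) * SS q x y n m =
      (\<Sum>l\<le>?R. \<Sum>k\<le>?R. F1 (int l) (int k)) + (\<Sum>l\<le>?R. \<Sum>k\<le>?R. F2 (int l) (int k))
      + (\<Sum>l\<le>?R. \<Sum>k\<le>?R. F3 (int l) (int k))"
    unfolding SS_def Nf_def[symmetric] sum_distrib_left pt sum.distrib ..
  have A2: "x * (1 - q ^ m) * SS q x y n (m - 1) = (\<Sum>l\<le>?R. \<Sum>k\<le>?R. F4 (int l) (int k))"
    unfolding SS_def F4_def sum_distrib_left by (simp add: mult.assoc)
  have B2: "(\<Sum>l\<le>?R. \<Sum>k\<le>?R. F2 (int l) (int k)) = (\<Sum>l\<le>?R. \<Sum>k\<le>?R. F2 (int l - 1) (int k))"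
    by (rule shift_sum[symmetric, where f = "\<lambda>l. \<Sum>k\<le>?R. F2 l (int k)"])
       (simp_all add: F2_def CC_def Wf_neg)
  have B4: "(\<Sum>l\<le>?R. \<Sum>k\<le>?R. F4 (int l) (int k)) = (\<Sum>l\<le>?R. \<Sum>k\<le>?R. F4 (int l - 1) (int k))"
    by (rule shift_sum[symmetric, where f = "\<lambda>l. \<Sum>k\<le>?R. F4 l (int k)"])
       (simp_all add: F4_def CC_def Wf_neg)
  have B3: "(\<Sum>l\<le>?R. \<Sum>k\<le>?R. F3 (int l) (int k)) = (\<Sum>l\<le>?R. \<Sum>k\<le>?R. F3 (int l) (int k - 1))"
    by (rule sum.cong[OF refl], rule shift_sum[symmetric, where f = "\<lambda>k. F3 (int _) k"])
       (simp_all add: F3_def CC_def Wf_neg)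
  have E: "?C (Suc m) (int l) (int k) * ?h (nat (int n + int (Suc m) - 2 * int l - int k))
      = F1 (int l) (int k) + F2 (int l - 1) (int k) + F3 (int l) (int k - 1) - F4 (int l - 1) (int k)"
    for l k :: nat
  proof -
    define I where "I = nat (int n + int (Suc m) - 2 * int l - int k)"
    have h1: "?C m (int l) (int k) * ?h (Nf (int l) (int k) + 1) = ?C m (int l) (int k) * ?h I"
    proof (cases "?C m (int l) (int k) = 0")
      case False
      have z: "0 \<le> int n + int m - 2 * int l - int k" using CC_supp[OF False] by linarith
      have "I = nat ((int n + int m - 2 * int l - int k) + 1)" unfolding I_def by (simp add: algebra_simps)
      also have "\<dots> = Nf (int l) (int k) + 1" unfolding Nf_def using z by (simp add: nat_add_distrib)
      finally have "Nf (int l) (int k) + 1 = I" by simp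
      then show ?thesis by simp
    qed simp
    have h2: "Nf (int l - 1) (int k) - 1 = I" unfolding Nf_def I_def by simp
    have h3: "Nf (int l) (int k - 1) = I" unfolding Nf_def I_def by (simp add: algebra_simps)
    have h4: "F4 (int l - 1) (int k) = x * (1 - q ^ m) * ?C (m - 1) (int l - 1) (int k) * ?h I"
    proof (cases "m = 0")
      case True then show ?thesis unfolding F4_def by simp
    next
      case False
      then have "nat (int n + int (m - 1) - 2 * (int l - 1) - int k) = I" unfolding I_def by simp
      then show ?thesis unfolding F4_def by simp
    qed
    have c: "?C (Suc m) (int l) (int k) = ?C m (int l) (int k)
     + x * (1 - q ^ Nf (int l - 1) (int k)) * ?C m (int l - 1) (int k)
     + y * (q ^ Nf (int l) (int k - 1) - q ^ m) * ?C m (int l) (int k - 1)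
     - x * (1 - q ^ m) * ?C (m - 1) (int l - 1) (int k)"
      unfolding Nf_def by (rule coeff[OF q])
    show ?thesis unfolding I_def[symmetric] F1_def h1 F2_def h2 F3_def h3 h4 c
      by (simp add: algebra_simps)
  qed
  have "SS q x y n (Suc m) = (\<Sum>l\<le>?R. \<Sum>k\<le>?R.
      F1 (int l) (int k) + F2 (int l - 1) (int k) + F3 (int l) (int k - 1) - F4 (int l - 1) (int k))"
    unfolding SS_def E ..
  also have "\<dots> = (\<Sum>l\<le>?R. \<Sum>k\<le>?R. F1 (int l) (int k)) + (\<Sum>l\<le>?R. \<Sum>k\<le>?R. F2 (int l - 1) (int k))
      + (\<Sum>l\<le>?R. \<Sum>k\<le>?R. F3 (int l) (int k - 1)) - (\<Sum>l\<le>?R. \<Sum>k\<le>?R. F4 (int l - 1) (int k))"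
    by (simp add: sum.distrib sum_subtractf)
  finally show ?thesis unfolding A1 A2 B2 B3 B4 by simp
qed


lemma SS_0:
  assumes q: "norm q < 1"
  shows "SS q x y n 0 = hq q n x y"
proof -
  have t: "CC q x y n 0 (int l) (int k) * hq q (nat (int n + int 0 - 2 * int l - int k)) x y
      = (if l = 0 then (if k = 0 then hq q n x y else 0) else 0)" for l k :: nat
  proof (cases "l = 0 \<and> k = 0")
    case True
    then show ?thesis using qpoch_nz[OF q, of n]
      by (simp add: CC_def Wf_def ee_def qpoch_def[of q q 0] numeral_2_eq_2)
  next
    case False
    then have "int 0 - int l - int k < 0" by auto
    then show ?thesis using False unfolding CC_def by (auto simp: Wf_neg)
  qed
  have u: "(\<Sum>k\<le>n+1. (if l = 0 then (if k = 0 then hq q n x y else 0) else 0)) = (if l = 0 then hq q n x y else 0)" for l :: nat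
    by (cases "l = 0") (simp_all only: if_True if_False sum.delta finite_atMost atMost_iff sum.neutral_const, simp_all)
  show ?thesis unfolding SS_def t u by (simp only: sum.delta finite_atMost atMost_iff) simp
qed

lemma hq_0: "hq q 0 x y = 1"
  by (simp add: hq_def qbinom_def qpoch_def Pq_def)

lemma main_SS:
  assumes q: "norm q < 1"
  shows "hq q n x y * hq q m x y = SS q x y n m \<and> hq q n x y * hq q (Suc m) x y = SS q x y n (Suc m)"
proof (induction m)
  case 0
  have "hq q (Suc 0) x y = (1 + x - y)" using hq_rec[OF q, of 0 x y] by (simp add: hq_0)
  moreover have "SS q x y n (Suc 0) = (1 + x - y) * SS q x y n 0" using SS_step[OF q, of x y n 0] by simp
  ultimately show ?case using SS_0[OF q] hq_0 by (simp add: mult.commute)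
next
  case (Suc m)
  have s: "SS q x y n (Suc (Suc m)) = (1 + x - y * q ^ Suc m) * SS q x y n (Suc m) - x * (1 - q ^ Suc m) * SS q x y n m"
    using SS_step[OF q, of x y n "Suc m"] by simp
  have r: "hq q (Suc (Suc m)) x y = (1 + x - y * q ^ Suc m) * hq q (Suc m) x y - x * (1 - q ^ Suc m) * hq q m x y"
    using hq_rec[OF q, of "Suc m" x y] by simp
  have "hq q n x y * hq q (Suc (Suc m)) x y = (1 + x - y * q ^ Suc m) * (hq q n x y * hq q (Suc m) x y)
      - x * (1 - q ^ Suc m) * (hq q n x y * hq q m x y)"
    unfolding r by algebra
  also have "\<dots> = SS q x y n (Suc (Suc m))" unfolding s using Suc.IH by simp
  finally show ?case using Suc.IH by simp
qed


lemma term_eq: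
  assumes q: "norm q < 1"
  shows "qbinom q m l * qbinom q n l * qbinom q (m - l) k * qbinom q (n - l) k
       * qpoch q q k * qpoch q q l * (-1) ^ k * x ^ l * y ^ k * q ^ (k choose 2)
       * hq q (n + m - 2 * l - k) x y
     = CC q x y n m (int l) (int k) * hq q (nat (int n + int m - 2 * int l - int k)) x y"
proof -
  have w: "qbinom q m l * qbinom q n l * qbinom q (m - l) k * qbinom q (n - l) k * qpoch q q k * qpoch q q l
     = qpoch q q m * qpoch q q n * Wf q (int l) * Wf q (int k) * Wf q (int m - int l - int k) * Wf q (int n - int l - int k)"
  proof (cases "l \<le> m \<and> l \<le> n")
    case True
    have a: "qbinom q m l = qpoch q q m * (1 / qpoch q q l) * (1 / qpoch q q (m - l))"
      using True by (simp add: qbinom_def)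
    have b: "qbinom q n l = qpoch q q n * (1 / qpoch q q l) * (1 / qpoch q q (n - l))"
      using True by (simp add: qbinom_def)
    have c: "qbinom q (m - l) k = qpoch q q (m - l) * (1 / qpoch q q k) * Wf q (int m - int l - int k)"
      using True by (simp add: qbinom_W[OF q] Wf_nat of_nat_diff)
    have d: "qbinom q (n - l) k = qpoch q q (n - l) * (1 / qpoch q q k) * Wf q (int n - int l - int k)"
      using True by (simp add: qbinom_W[OF q] Wf_nat of_nat_diff)
    show ?thesis unfolding a b c d Wf_nat
      using qpoch_nz[OF q, of l] qpoch_nz[OF q, of k] qpoch_nz[OF q, of "m - l"] qpoch_nz[OF q, of "n - l"]
      by (simp add: field_simps)
  next
    case False
    then show ?thesis by (auto simp: qbinom_def Wf_neg)
  qed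
  have "qbinom q m l * qbinom q n l * qbinom q (m - l) k * qbinom q (n - l) k
       * qpoch q q k * qpoch q q l * (-1) ^ k * x ^ l * y ^ k * q ^ (k choose 2)
       * hq q (n + m - 2 * l - k) x y
     = (qbinom q m l * qbinom q n l * qbinom q (m - l) k * qbinom q (n - l) k * qpoch q q k * qpoch q q l)
       * (x ^ l * ee q y k) * hq q (n + m - 2 * l - k) x y"
    by (simp add: ee_def algebra_simps)
  also have "\<dots> = CC q x y n m (int l) (int k) * hq q (n + m - 2 * l - k) x y"
    unfolding w CC_def by (simp add: algebra_simps)
  also have "\<dots> = CC q x y n m (int l) (int k) * hq q (nat (int n + int m - 2 * int l - int k)) x y"
  proof (cases "CC q x y n m (int l) (int k) = 0")
    case False
    from CC_supp[OF False] have "n + m - 2 * l - k = nat (int n + int m - 2 * int l - int k)"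
      by linarith
    then show ?thesis by simp
  qed simp
  finally show ?thesis .
qed

theorem corollary3p4:
  fixes q x y :: complex and n m :: nat
  assumes "norm q < 1"
  shows "hq q n x y * hq q m x y =
    (\<Sum>l=0..min m n. \<Sum>k=0..min m n.
       qbinom q m l * qbinom q n l * qbinom q (m - l) k * qbinom q (n - l) k
       * qpoch q q k * qpoch q q l * (-1) ^ k * x ^ l * y ^ k * q ^ (k choose 2)
       * hq q (n + m - 2 * l - k) x y)"
proof -
  note q = assms
  define g where "g l k = CC q x y n m (int l) (int k) * hq q (nat (int n + int m - 2 * int l - int k)) x y" for l k :: nat
  have gz: "g l k = 0" if "min m n < l + k" for l k
  proof (rule ccontr)
    assume "g l k \<noteq> 0"
    then have "CC q x y n m (int l) (int k) \<noteq> 0" unfolding g_def by auto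
    from CC_supp[OF this] that show False by linarith
  qed
  have "(\<Sum>l=0..min m n. \<Sum>k=0..min m n.
       qbinom q m l * qbinom q n l * qbinom q (m - l) k * qbinom q (n - l) k
       * qpoch q q k * qpoch q q l * (-1) ^ k * x ^ l * y ^ k * q ^ (k choose 2)
       * hq q (n + m - 2 * l - k) x y) = (\<Sum>l=0..min m n. \<Sum>k=0..min m n. g l k)"
    unfolding g_def term_eq[OF q] ..
  also have "\<dots> = (\<Sum>l=0..min m n. \<Sum>k\<le>n+1. g l k)"
  proof (rule sum.cong[OF refl])
    fix l assume "l \<in> {0..min m n}"
    show "(\<Sum>k=0..min m n. g l k) = (\<Sum>k\<le>n+1. g l k)"
      by (rule sum.mono_neutral_left) (auto intro!: gz)
  qed
  also have "\<dots> = (\<Sum>l\<le>n+1. \<Sum>k\<le>n+1. g l k)"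
  proof (rule sum.mono_neutral_left)
    show "\<forall>l\<in>{..n+1} - {0..min m n}. (\<Sum>k\<le>n+1. g l k) = 0"
    proof
      fix l assume "l \<in> {..n+1} - {0..min m n}"
      then have lt: "min m n < l" by auto
      show "(\<Sum>k\<le>n+1. g l k) = 0" by (rule sum.neutral, rule ballI, rule gz) (use lt in linarith)
    qed
  qed auto
  also have "\<dots> = SS q x y n m" unfolding SS_def g_def ..
  finally show ?thesis using main_SS[OF q, of n x y m] by simp
qed

end
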